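(* Let $a,b,c,d,e,f\in[0,1]$ and set $Q_3=2abef+2acdf+2bcde+2abd+2ace+2bcf+2def+a^2+b^2+c^2+d^2+e^2+f^2-a^2f^2-b^2e^2-c^2d^2-1$, $A_i=d^2+e^2+f^2+2def-1$, $A_j=b^2+c^2+f^2+2bcf-1$, $A_k=a^2+c^2+e^2+2ace-1$, $A_h=a^2+b^2+d^2+2abd-1$. If $A_\nu\ge 0$ for at least one $\nu\in\{i,j,k,h\}$, then $Q_3\ge0$. In particular, if $A_\nu>0$ for some $\nu$, then $Q_3>0$.
   Context: In the paper $a,\dots,f$ are the cosines $\cos\Phi_{ij},\cos\Phi_{ik},\cos\Phi_{ih},\cos\Phi_{jk},\cos\Phi_{jh},\cos\Phi_{kh}$ of edge weights $\Phi\in[0,\frac{\pi}{2}]$ on a truncated tetrahedron $\{ijkh\}$. *)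

theory Defs
  imports Complex_Main
begin

definition Q3 :: "real \<Rightarrow> real \<Rightarrow> real \<Rightarrow> real \<Rightarrow> real \<Rightarrow> real \<Rightarrow> real" where
  "Q3 a b c d e f = 2*a*b*e*f + 2*a*c*d*f + 2*b*c*d*e + 2*a*b*d + 2*a*c*e + 2*b*c*f + 2*d*e*f
     + a^2 + b^2 + c^2 + d^2 + e^2 + f^2 - a^2*f^2 - b^2*e^2 - c^2*d^2 - 1"

definition A_i :: "real \<Rightarrow> real \<Rightarrow> real \<Rightarrow> real" where
  "A_i d e f = d^2 + e^2 + f^2 + 2*d*e*f - 1"
definition A_j :: "real \<Rightarrow> real \<Rightarrow> real \<Rightarrow> real" where
  "A_j b c f = b^2 + c^2 + f^2 + 2*b*c*f - 1"
definition A_k :: "real \<Rightarrow> real \<Rightarrow> real \<Rightarrow> real" where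
  "A_k a c e = a^2 + c^2 + e^2 + 2*a*c*e - 1"
definition A_h :: "real \<Rightarrow> real \<Rightarrow> real \<Rightarrow> real" where
  "A_h a b d = a^2 + b^2 + d^2 + 2*a*b*d - 1"

end

theory Submission
  imports Defs
begin

lemma nn: "0 \<le> (x::real) \<Longrightarrow> x \<le> 1 \<Longrightarrow> 0 \<le> 1 - x^2"
  by (simp add: power_le_one)

theorem lemma2p3:
  fixes a b c d e f :: real
  assumes "a \<in> {0..1}" "b \<in> {0..1}" "c \<in> {0..1}" "d \<in> {0..1}" "e \<in> {0..1}" "f \<in> {0..1}"
  shows "(A_i d e f \<ge> 0 \<or> A_j b c f \<ge> 0 \<or> A_k a c e \<ge> 0 \<or> A_h a b d \<ge> 0 \<longrightarrow> Q3 a b c d e f \<ge> 0)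
       \<and> (A_i d e f > 0 \<or> A_j b c f > 0 \<or> A_k a c e > 0 \<or> A_h a b d > 0 \<longrightarrow> Q3 a b c d e f > 0)"
proof -
  have a: "0 \<le> a" "a \<le> 1" and b: "0 \<le> b" "b \<le> 1" and c: "0 \<le> c" "c \<le> 1"
   and d: "0 \<le> d" "d \<le> 1" and e: "0 \<le> e" "e \<le> 1" and f: "0 \<le> f" "f \<le> 1"
    using assms by auto
  have sa: "0 \<le> 1 - a^2" using a nn by blast
  have sb: "0 \<le> 1 - b^2" using b nn by blast
  have sc: "0 \<le> 1 - c^2" using c nn by blast
  have sd: "0 \<le> 1 - d^2" using d nn by blast
  have se: "0 \<le> 1 - e^2" using e nn by blast
  have sf: "0 \<le> 1 - f^2" using f nn by blast
  have p: "0 \<le> a*b*e*f" "0 \<le> a*c*d*f" "0 \<le> b*c*d*e" "0 \<le> a*b*d" "0 \<le> a*c*e"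
          "0 \<le> b*c*f" "0 \<le> d*e*f" "0 \<le> a*d*f*c" "0 \<le> b*d*e*c" "0 \<le> a*e*c" "0 \<le> b*f*c"
    using a b c d e f by auto
  have q: "0 \<le> x^2 * (1 - y^2)" if "0 \<le> 1 - y^2" for x y :: real
    using that by simp
  have h: "Q3 a b c d e f - A_h a b d = c^2*(1-d^2) + e^2*(1-b^2) + f^2*(1-a^2)
       + 2*(a*d*f*c + b*d*e*c + a*e*c + b*f*c) + 2*(a*b*e*f + d*e*f)"
    unfolding Q3_def A_h_def by (simp add: algebra_simps power2_eq_square)
  have i: "Q3 a b c d e f - A_i d e f = a^2*(1-f^2) + b^2*(1-e^2) + c^2*(1-d^2)
       + 2*(a*b*e*f + a*c*d*f + b*c*d*e + a*b*d + a*c*e + b*c*f)"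
    unfolding Q3_def A_i_def by (simp add: algebra_simps power2_eq_square)
  have j: "Q3 a b c d e f - A_j b c f = a^2*(1-f^2) + d^2*(1-c^2) + e^2*(1-b^2)
       + 2*(a*b*e*f + a*c*d*f + b*c*d*e + a*b*d + a*c*e + d*e*f)"
    unfolding Q3_def A_j_def by (simp add: algebra_simps power2_eq_square)
  have k: "Q3 a b c d e f - A_k a c e = b^2*(1-e^2) + d^2*(1-c^2) + f^2*(1-a^2)
       + 2*(a*b*e*f + a*c*d*f + b*c*d*e + a*b*d + b*c*f + d*e*f)"
    unfolding Q3_def A_k_def by (simp add: algebra_simps power2_eq_square)
  have 1: "0 \<le> Q3 a b c d e f - A_h a b d"
    unfolding h using p q[OF sd, of c] q[OF sb, of e] q[OF sa, of f] by simp
  have 2: "0 \<le> Q3 a b c d e f - A_i d e f"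
    unfolding i using p q[OF sf, of a] q[OF se, of b] q[OF sd, of c] by simp
  have 3: "0 \<le> Q3 a b c d e f - A_j b c f"
    unfolding j using p q[OF sf, of a] q[OF sc, of d] q[OF sb, of e] by simp
  have 4: "0 \<le> Q3 a b c d e f - A_k a c e"
    unfolding k using p q[OF se, of b] q[OF sc, of d] q[OF sa, of f] by simp
  show ?thesis using 1 2 3 4 by linarith
qed

end
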